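(* Let $\mathbf{X}$ be a Banach space, $\mathcal{S}\subset\mathbf{X}$, and let $\mathbb{P}$ be a Borel probability measure on $\mathcal{S}$ of logarithmic growth order $s_0\ge0$ with respect to $\mathbf{X}$. Let $s>s_0$ and let $c=c(s)>0$, $\varepsilon_0=\varepsilon_0(s)>0$ be such that $\mathbb{P}(\mathcal{S}\cap\mathcal{B}(\mathbf{x},\varepsilon;\mathbf{X}))\le2^{-c\varepsilon^{-1/s}}$ for all $\mathbf{x}\in\mathbf{X}$, $\varepsilon\in(0,\varepsilon_0)$. Then for any $R\in\mathbb{N}$ and any encoder/decoder pair $(E_R,D_R)$ of code-length $R$, \[\mathbb{P}^\ast(\{\mathbf{x}\in\mathcal{S}:\|\mathbf{x}-D_R(E_R(\mathbf{x}))\|_{\mathbf{X}}\le\varepsilon\})\le2^{R-c\varepsilon^{-1/s}}\qquad\forall\varepsilon\in(0,\varepsilon_0).\] Furthermore, for any $s>s_0$ and $K>0$ there exists $R_0=R_0(s,s_0,K,\mathbb{P},\mathcal{S},\mathbf{X})\in\mathbb{N}$ such that for every codec $\mathcal{C}=((E_R,D_R))_{R\in\mathbb{N}}$, \[\mathbb{P}^\ast(\{\mathbf{x}\in\mathcal{S}:\|\mathbf{x}-D_R(E_R(\mathbf{x}))\|_{\mathbf{X}}\le K\cdot R^{-s}\})\le2^{-R}\qquad\forall R\ge R_0.\]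
   Context: Let $(\mathbf{X},\|\cdot\|_{\mathbf{X}})$ be a real Banach space and $\mathcal{S}\subset\mathbf{X}$. An encoder/decoder pair of code-length $R$ is a pair of maps $E_R:\mathcal{S}\to\{0,1\}^R$, $D_R:\{0,1\}^R\to\mathbf{X}$; a codec is a sequence $((E_R,D_R))_{R\in\mathbb{N}}$ of such pairs. $\mathcal{S}$ carries the trace $\sigma$-algebra of the Borel $\sigma$-algebra of $\mathbf{X}$; $\mathbb{P}^\ast(M)=\inf\{\sum_n\mathbb{P}(M_n):M_n\text{ measurable},M\subset\bigcup_nM_n\}$ is the outer measure. $\mathcal{B}(\mathbf{x},\varepsilon;\mathbf{X})$ is the closed ball. $\mathbb{P}$ has (logarithmic) growth order $s_0\in[0,\infty)$ w.r.t. $\mathbf{X}$ if for every $s>s_0$ there exist $\varepsilon_0,c>0$ with $\mathbb{P}(\mathcal{S}\cap\mathcal{B}(\mathbf{x},\varepsilon;\mathbf{X}))\le2^{-c\varepsilon^{-1/s}}$ for all $\mathbf{x}\in\mathbf{X}$, $\varepsilon\in(0,\varepsilon_0)$. *)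

theory Defs
  imports "HOL-Probability.Probability"
begin

definition outer_prob :: "'a measure \<Rightarrow> 'a set \<Rightarrow> ennreal" where
  "outer_prob M A = (INF B \<in> {B :: nat \<Rightarrow> 'a set. range B \<subseteq> sets M \<and> A \<subseteq> (\<Union>n. B n)}.
                        (\<Sum>n. emeasure M (B n)))"

definition borel_prob_on :: "'a::topological_space set \<Rightarrow> 'a measure \<Rightarrow> bool" where
  "borel_prob_on S M \<longleftrightarrow> prob_space M \<and> sets M = sets (restrict_space borel S)"

definition growth_order :: "'a::real_normed_vector set \<Rightarrow> 'a measure \<Rightarrow> real \<Rightarrow> bool" where
  "growth_order S M s0 \<longleftrightarrow> s0 \<ge> 0 \<and>
     (\<forall>s > s0. \<exists>eps0 > 0. \<exists>c > 0. \<forall>x eps. 0 < eps \<and> eps < eps0 \<longrightarrow>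
        measure M (S \<inter> cball x eps) \<le> 2 powr (- c * eps powr (-1 / s)))"

definition enc_dec_pair :: "'a set \<Rightarrow> nat \<Rightarrow> ('a \<Rightarrow> bool list) \<Rightarrow> (bool list \<Rightarrow> 'a) \<Rightarrow> bool" where
  "enc_dec_pair S R E D \<longleftrightarrow> (\<forall>x\<in>S. length (E x) = R)"

definition codec :: "'a set \<Rightarrow> (nat \<Rightarrow> 'a \<Rightarrow> bool list) \<Rightarrow> (nat \<Rightarrow> bool list \<Rightarrow> 'a) \<Rightarrow> bool" where
  "codec S E D \<longleftrightarrow> (\<forall>R. enc_dec_pair S R (E R) (D R))"

end

theory Submission
  imports Defs "HOL-Real_Asymp.Real_Asymp"
begin

lemma asym1:
  fixes C p :: real assumes "C > 0" "p > 1"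
  shows "eventually (\<lambda>R::nat. 2 * real R \<le> C * real R powr p) at_top"
  using assms by real_asymp

lemma asym2:
  fixes K a e :: real assumes "K > 0" "a > 0" "e>0"
  shows "eventually (\<lambda>R::nat. K * real R powr (-a) < e) at_top"
  using assms by real_asymp

lemma cover_bound:
  fixes S :: "'a::banach set" and M :: "'a measure"
  assumes bp: "borel_prob_on S M" and ed: "enc_dec_pair S R E D"
    and b: "\<forall>x. measure M (S \<inter> cball x eps) \<le> b"
  shows "outer_prob M {x\<in>S. norm (x - D (E x)) \<le> eps} \<le> ennreal (2 ^ R * b)"
proof -
  interpret prob_space M using bp unfolding borel_prob_on_def by blast
  have sM: "sets M = sets (restrict_space borel S)" using bp unfolding borel_prob_on_def by blast
  define ws where "ws = List.n_lists R [True, False]"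
  have lws: "length ws = 2 ^ R" unfolding ws_def length_n_lists by (simp only: list.size numeral_2_eq_2 One_nat_def add_0 add_Suc_right add_Suc)
  have sws: "set ws = {xs. set xs \<subseteq> {True, False} \<and> length xs = R}"
    unfolding ws_def set_n_lists by auto
  define B where "B = (\<lambda>n. if n < length ws then S \<inter> cball (D (ws ! n)) eps else {})"
  have meas: "S \<inter> cball y eps \<in> sets M" for y
    unfolding sM sets_restrict_space by auto
  have rB: "range B \<subseteq> sets M" unfolding B_def using meas by auto
  have cov: "{x\<in>S. norm (x - D (E x)) \<le> eps} \<subseteq> (\<Union>n. B n)"
  proof
    fix x assume x: "x \<in> {x\<in>S. norm (x - D (E x)) \<le> eps}"
    then have "E x \<in> set ws" using ed unfolding sws enc_dec_pair_def by auto
    then obtain n where n: "n < length ws" "ws ! n = E x" by (metis in_set_conv_nth)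
    have "x \<in> B n" using x n unfolding B_def by (auto simp: dist_norm norm_minus_commute)
    then show "x \<in> (\<Union>n. B n)" by blast
  qed
  have "outer_prob M {x\<in>S. norm (x - D (E x)) \<le> eps} \<le> (\<Sum>n. emeasure M (B n))"
    unfolding outer_prob_def using rB cov by (intro INF_lower) auto
  also have "(\<Sum>n. emeasure M (B n)) = (\<Sum>n<length ws. emeasure M (B n))"
    by (rule suminf_finite) (auto simp: B_def)
  also have "\<dots> \<le> (\<Sum>n<length ws. ennreal b)"
  proof (rule sum_mono)
    fix n assume "n \<in> {..<length ws}"
    then show "emeasure M (B n) \<le> ennreal b"
      unfolding B_def using b by (simp add: emeasure_eq_measure ennreal_leI)
  qed
  also have "\<dots> = ennreal (2 ^ R * b)"
  proof -
    have "b \<ge> 0" using b measure_nonneg order_trans by blast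
    have e2: "ennreal ((2::real)^R) = 2^R" using ennreal_power[of 2 R] by simp
    then have "ennreal (2 ^ R * b) = 2^R * ennreal b"
      using ennreal_mult[of "2^R" b] e2 \<open>b \<ge> 0\<close> by simp
    then show ?thesis using lws by (simp add: ennreal_of_nat_eq_real_of_nat[symmetric] mult.commute)
  qed
  finally show ?thesis .
qed

lemma pow_eq: "(2::real) ^ R * 2 powr (- a) = 2 powr (real R - a)"
  by (simp add: powr_diff powr_minus_divide powr_realpow[symmetric] divide_inverse)

theorem lemma2p3:
  fixes S :: "'a::banach set" and M :: "'a measure"
    and s0 s c eps0 :: real
  assumes "borel_prob_on S M"
    and "growth_order S M s0"
    and "s > s0" and "c > 0" and "eps0 > 0"
    and "\<forall>x eps. 0 < eps \<and> eps < eps0 \<longrightarrow>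
           measure M (S \<inter> cball x eps) \<le> 2 powr (- c * eps powr (-1 / s))"
  shows "(\<forall>R E D. enc_dec_pair S R E D \<longrightarrow>
            (\<forall>eps. 0 < eps \<and> eps < eps0 \<longrightarrow>
               outer_prob M {x\<in>S. norm (x - D (E x)) \<le> eps}
                 \<le> ennreal (2 powr (real R - c * eps powr (-1 / s)))))
       \<and> (\<forall>s'. s' > s0 \<longrightarrow> (\<forall>K > 0. \<exists>R0::nat. \<forall>E D. codec S E D \<longrightarrow>
            (\<forall>R \<ge> R0. outer_prob M {x\<in>S. norm (x - D R (E R x)) \<le> K * real R powr (- s')}
                 \<le> ennreal (2 powr (- real R)))))"
proof (intro conjI allI impI)
  fix R E D eps
  assume ed: "enc_dec_pair S R E D" and e: "0 < eps \<and> eps < eps0"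
  have "outer_prob M {x\<in>S. norm (x - D (E x)) \<le> eps} \<le> ennreal (2 ^ R * 2 powr (- c * eps powr (-1 / s)))"
    using cover_bound[OF assms(1) ed] assms(6) e by auto
  then show "outer_prob M {x\<in>S. norm (x - D (E x)) \<le> eps}
                 \<le> ennreal (2 powr (real R - c * eps powr (-1 / s)))"
    using pow_eq[of R "c * eps powr (-1 / s)"] by simp
next
  fix s' K :: real
  assume s': "s' > s0" and K: "K > 0"
  have s00: "s0 \<ge> 0" using assms(2) unfolding growth_order_def by blast
  define t where "t = (s0 + s') / 2"
  have t: "t > s0" "t > 0" "s' / t > 1" using s' s00 by (auto simp: t_def field_simps)
  obtain e0 c' where e0: "e0 > 0" "c' > 0" and bnd: "\<forall>x eps. 0 < eps \<and> eps < e0 \<longrightarrow>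
        measure M (S \<inter> cball x eps) \<le> 2 powr (- c' * eps powr (-1 / t))"
    using assms(2) t(1) unfolding growth_order_def by blast
  have s'pos: "s' > 0" using s' s00 by linarith
  have ev: "eventually (\<lambda>R::nat. R \<ge> 1 \<and> K * real R powr (-s') < e0 \<and>
       2 * real R \<le> (c' * K powr (-1/t)) * real R powr (s'/t)) at_top"
    using eventually_ge_at_top[of 1] asym2[OF K s'pos e0(1)]
      asym1[of "c' * K powr (-1/t)" "s'/t"] e0(2) K t(3)
    by (auto intro: eventually_conj)
  then obtain R0 where R0: "\<And>R. R \<ge> R0 \<Longrightarrow> R \<ge> 1 \<and> K * real R powr (-s') < e0 \<and>
       2 * real R \<le> (c' * K powr (-1/t)) * real R powr (s'/t)"
    unfolding eventually_at_top_linorder by blast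
  show "\<exists>R0::nat. \<forall>E D. codec S E D \<longrightarrow>
            (\<forall>R \<ge> R0. outer_prob M {x\<in>S. norm (x - D R (E R x)) \<le> K * real R powr (- s')}
                 \<le> ennreal (2 powr (- real R)))"
  proof (intro exI allI impI)
    fix E D R assume cd: "codec S E D" and R: "R \<ge> R0"
    define eps where "eps = K * real R powr (- s')"
    have R1: "R \<ge> 1" and ee: "eps < e0" and big: "2 * real R \<le> (c' * K powr (-1/t)) * real R powr (s'/t)"
      using R0[OF R] by (auto simp: eps_def)
    have epos: "eps > 0" using R1 K by (simp add: eps_def)
    have ed: "enc_dec_pair S R (E R) (D R)" using cd unfolding codec_def by blast
    have "outer_prob M {x\<in>S. norm (x - D R (E R x)) \<le> eps} \<le> ennreal (2 ^ R * 2 powr (- c' * eps powr (-1 / t)))"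
      using cover_bound[OF assms(1) ed] bnd epos ee by auto
    also have "2 ^ R * 2 powr (- c' * eps powr (-1 / t)) = 2 powr (real R - c' * eps powr (-1 / t))"
      using pow_eq[of R "c' * eps powr (-1 / t)"] by simp
    also have "eps powr (-1/t) = K powr (-1/t) * real R powr (s'/t)"
    proof -
      have "eps powr (-1/t) = K powr (-1/t) * (real R powr (-s')) powr (-1/t)"
        unfolding eps_def using K R1 by (simp add: powr_mult)
      also have "(real R powr (-s')) powr (-1/t) = real R powr (s'/t)"
        by (simp add: powr_powr)
      finally show ?thesis .
    qed
    also have "2 powr (real R - c' * (K powr (-1/t) * real R powr (s'/t))) \<le> 2 powr (- real R)"
      using big by (intro powr_mono) (auto simp: algebra_simps)
    finally show "outer_prob M {x\<in>S. norm (x - D R (E R x)) \<le> K * real R powr (- s')}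
                 \<le> ennreal (2 powr (- real R))" unfolding eps_def by (simp add: ennreal_leI order_trans)
  qed
qed

end
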